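(* Let $a=(w_1,\dots,w_n)$ be a CLT sentence with every $w_i$ a closed word with first letter $1$ and no self edge. Then: (i) for each $i$ there exists a unique $j\ne i$ with $E_{w_i}\cap E_{w_j}\ne\emptyset$; (ii) $n$ is even, and there is a partition of $\{1,\dots,n\}$ into $n/2$ pairs $\{p_r,q_r\}$ ($r=1,\dots,n/2$) such that (a) each $a_r=(w_{p_r},w_{q_r})$ is a CLT pair; (b) the edge sets $E_{a_r}=E_{w_{p_r}}\cup E_{w_{q_r}}$ are pairwise disjoint; (c) the sets $V_r\setminus\{1\}$ are pairwise disjoint, where $V_r=\mathrm{supp}(w_{p_r})\cup\mathrm{supp}(w_{q_r})$.
   Context: A word is a finite sequence $w=(s_1,\dots,s_m)$ of positive integers; $\ell(w)=m$; closed means $s_1=s_m$; $\mathrm{supp}(w)$ is its set of letters. Edges: $E_w=\{\{s_i,s_{i+1}\}:1\le i\le m-1\}$ (undirected); a self edge is $\{u,u\}$; $N_e^w=\#\{i\le m-1:\{s_i,s_{i+1}\}=e\}$. For a sentence (finite sequence of words) $a=(w_1,\dots,w_n)$: $\mathrm{wt}(a)=\#\bigcup_i\mathrm{supp}(w_i)$, $E_a=\bigcup_iE_{w_i}$, $N_e^a=\sum_iN_e^{w_i}$. $a$ is a weak CLT sentence if $N_e^a\ge2$ for all $e\in E_a$ and for every $i$ there is $j\ne i$ with $E_{w_i}\cap E_{w_j}\ne\emptyset$; it is a CLT sentence if in addition $\mathrm{wt}(a)=1+\sum_{i=1}^n\frac{\ell(w_i)-2}{2}$. A pair $(w_1,w_2)$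 is a CLT pair if it is a weak CLT sentence with $n=2$ and $\mathrm{wt}((w_1,w_2))=\frac{\ell(w_1)+\ell(w_2)}{2}-1$. *)

theory Defs
  imports Complex_Main
begin

text \<open>A word is a finite list of positive integers (letters are nat, positivity is
an explicit hypothesis where needed). A sentence is a list of words; word i of
the sentence is a ! i for i < length a (0-based indexing).\<close>

definition word :: "nat list \<Rightarrow> bool" where
  "word w \<longleftrightarrow> (\<forall>s \<in> set w. 0 < s)"

definition closed_word :: "nat list \<Rightarrow> bool" where
  "closed_word w \<longleftrightarrow> w \<noteq> [] \<and> hd w = last w"

definition supp :: "nat list \<Rightarrow> nat set" where
  "supp w = set w"

text \<open>Undirected edges are represented as sets {u,v} (a self edge is {u}).\<close>
definition edges :: "nat list \<Rightarrow> nat set set" where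
  "edges w = {{w ! i, w ! (i+1)} | i. i + 1 < length w}"

definition edge_count :: "nat list \<Rightarrow> nat set \<Rightarrow> nat" where
  "edge_count w e = card {i. i + 1 < length w \<and> {w ! i, w ! (i+1)} = e}"

definition has_self_edge :: "nat list \<Rightarrow> bool" where
  "has_self_edge w \<longleftrightarrow> (\<exists>u. {u} \<in> edges w)"

definition wt :: "nat list list \<Rightarrow> nat" where
  "wt a = card (\<Union>i<length a. supp (a ! i))"

definition sent_edges :: "nat list list \<Rightarrow> nat set set" where
  "sent_edges a = (\<Union>i<length a. edges (a ! i))"

definition sent_edge_count :: "nat list list \<Rightarrow> nat set \<Rightarrow> nat" where
  "sent_edge_count a e = (\<Sum>i<length a. edge_count (a ! i) e)"

definition weak_CLT :: "nat list list \<Rightarrow> bool" where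
  "weak_CLT a \<longleftrightarrow>
     (\<forall>i<length a. word (a ! i)) \<and>
     (\<forall>e \<in> sent_edges a. 2 \<le> sent_edge_count a e) \<and>
     (\<forall>i<length a. \<exists>j<length a. j \<noteq> i \<and> edges (a ! i) \<inter> edges (a ! j) \<noteq> {})"

definition CLT :: "nat list list \<Rightarrow> bool" where
  "CLT a \<longleftrightarrow> weak_CLT a \<and>
     (of_nat (wt a) :: rat) = 1 + (\<Sum>i<length a. (of_nat (length (a ! i)) - 2) / 2)"

definition CLT_pair :: "nat list \<Rightarrow> nat list \<Rightarrow> bool" where
  "CLT_pair w1 w2 \<longleftrightarrow> weak_CLT [w1, w2] \<and>
     (of_nat (wt [w1, w2]) :: rat) = (of_nat (length w1) + of_nat (length w2)) / 2 - 1"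

end

theory Submission
  imports Defs
begin


lemma edges_alt: "edges w = (\<lambda>i. {w ! i, w ! Suc i}) ` {..<length w - 1}"
  unfolding edges_def by (auto simp: image_def less_diff_conv)

lemma finite_edges[simp]: "finite (edges w)"
  unfolding edges_alt by simp

lemma edge_count_sum:
  "edge_count w e = (\<Sum>i<length w - 1. if {w ! i, w ! Suc i} = e then 1 else 0)"
proof -
  have "{i. i + 1 < length w \<and> {w ! i, w ! (i+1)} = e} = {i \<in> {..<length w - 1}. {w ! i, w ! Suc i} = e}"
    by auto
  then show ?thesis unfolding edge_count_def
    by (simp add: sum.inter_filter[symmetric])
qed

lemma sum_edge_count:
  assumes "finite S"
  shows "(\<Sum>e\<in>S. edge_count w e) = card {i \<in> {..<length w - 1}. {w ! i, w ! Suc i} \<in> S}"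
proof -
  have "(\<Sum>e\<in>S. edge_count w e) = (\<Sum>i<length w - 1. \<Sum>e\<in>S. if {w ! i, w ! Suc i} = e then 1 else 0)"
    unfolding edge_count_sum by (rule sum.swap)
  also have "\<dots> = (\<Sum>i<length w - 1. if {w ! i, w ! Suc i} \<in> S then 1 else 0)"
    using assms by (simp add: sum.delta)
  also have "\<dots> = card {i \<in> {..<length w - 1}. {w ! i, w ! Suc i} \<in> S}"
    by (simp add: sum.inter_filter[symmetric])
  finally show ?thesis .
qed

lemma sum_edge_count_all:
  assumes "finite S" "edges w \<subseteq> S"
  shows "(\<Sum>e\<in>S. edge_count w e) = length w - 1"
proof -
  have "{i \<in> {..<length w - 1}. {w ! i, w ! Suc i} \<in> S} = {..<length w - 1}"
    using assms(2) unfolding edges_alt by auto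
  then show ?thesis using sum_edge_count[OF assms(1)] by simp
qed

lemma edge_count_pos: "0 < edge_count w e \<longleftrightarrow> e \<in> edges w"
proof -
  have f: "finite {i. i + 1 < length w \<and> {w ! i, w ! (i+1)} = e}"
    by (rule finite_subset[of _ "{..<length w}"]) auto
  show ?thesis unfolding edge_count_def edges_def
    using f by (auto simp: card_gt_0_iff)
qed

lemma edge_count_zero: "e \<notin> edges w \<Longrightarrow> edge_count w e = 0"
  using edge_count_pos[of w e] by simp

definition cross :: "nat set \<Rightarrow> nat set \<Rightarrow> bool" where
  "cross A e \<longleftrightarrow> (\<exists>x y. e = {x, y} \<and> x \<in> A \<and> y \<notin> A)"

lemma cross_pair: "cross A {a, b} \<longleftrightarrow> (a \<in> A) \<noteq> (b \<in> A)"
  unfolding cross_def by (auto simp: doubleton_eq_iff)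

lemma parity_aux:
  "j < length w \<Longrightarrow> even (card {i \<in> {..<j}. (w ! i \<in> A) \<noteq> (w ! Suc i \<in> A)}
      + (if (w ! 0 \<in> A) = (w ! j \<in> A) then 0 else 1))"
proof (induction j)
  case 0
  then show ?case by simp
next
  case (Suc j)
  let ?S = "\<lambda>j. {i \<in> {..<j}. (w ! i \<in> A) \<noteq> (w ! Suc i \<in> A)}"
  have IH: "even (card (?S j) + (if (w ! 0 \<in> A) = (w ! j \<in> A) then 0 else 1))"
    using Suc by simp
  show ?case
  proof (cases "(w ! j \<in> A) \<noteq> (w ! Suc j \<in> A)")
    case True
    then have "?S (Suc j) = insert j (?S j)" by (auto simp: less_Suc_eq)
    then have "card (?S (Suc j)) = Suc (card (?S j))" by simp
    then show ?thesis using IH True by auto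
  next
    case False
    then have "?S (Suc j) = ?S j" by (auto simp: less_Suc_eq)
    then show ?thesis using IH False by auto
  qed
qed

lemma cut_parity:
  assumes "w \<noteq> []" "hd w = last w" "finite S" "edges w \<subseteq> S"
  shows "even (\<Sum>e\<in>{e\<in>S. cross A e}. edge_count w e)"
proof -
  have fin: "finite {e\<in>S. cross A e}" using assms(3) by simp
  have "{i \<in> {..<length w - 1}. {w ! i, w ! Suc i} \<in> {e\<in>S. cross A e}}
       = {i \<in> {..<length w - 1}. (w ! i \<in> A) \<noteq> (w ! Suc i \<in> A)}"
    using assms(4) unfolding edges_alt by (auto simp: cross_pair)
  moreover have "w ! 0 = w ! (length w - 1)"
    using assms(1,2) by (simp add: hd_conv_nth last_conv_nth)
  ultimately show ?thesis
    using sum_edge_count[OF fin, of w] parity_aux[of "length w - 1" w A] assms(1) by simp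
qed



locale clt_sent =
  fixes b :: "nat list list"
  assumes nz: "0 < length b"
  and cl: "\<forall>i<length b. b!i \<noteq> [] \<and> hd (b!i) = 1 \<and> last (b!i) = 1 \<and> \<not> has_self_edge (b!i)"
  and cnt2: "\<forall>e \<in> sent_edges b. 2 \<le> sent_edge_count b e"
  and share: "\<forall>i<length b. \<exists>j<length b. j \<noteq> i \<and> edges (b!i) \<inter> edges (b!j) \<noteq> {}"
begin

abbreviation "n \<equiv> length b"
definition "V = (\<Union>i<n. set (b!i))"
abbreviation "E \<equiv> sent_edges b"
abbreviation "c i e \<equiv> edge_count (b!i) e"
abbreviation "k e \<equiv> sent_edge_count b e"
definition "R = {(x,y). {x,y} \<in> E}"

lemma finV: "finite V" unfolding V_def by simp
lemma finE: "finite E" unfolding sent_edges_def by simp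
lemma edges_sub_E: "i < n \<Longrightarrow> edges (b!i) \<subseteq> E" unfolding sent_edges_def by auto
lemma oneV: "1 \<in> V"
proof -
  have "b!0 \<noteq> []" "hd (b!0) = 1" using cl nz by auto
  then have "1 \<in> set (b!0)" by (metis hd_in_set)
  then show ?thesis using nz unfolding V_def by auto
qed

lemma k_def': "k e = (\<Sum>i<n. c i e)" unfolding sent_edge_count_def by simp

lemma E_shape: assumes "e \<in> E" shows "\<exists>x y. e = {x,y} \<and> x \<noteq> y \<and> x \<in> V \<and> y \<in> V"
proof -
  obtain i where i: "i < n" "e \<in> edges (b!i)" using assms unfolding sent_edges_def by auto
  then obtain j where j: "j + 1 < length (b!i)" "e = {b!i!j, b!i!(j+1)}" unfolding edges_def by auto
  have "b!i!j \<noteq> b!i!(j+1)"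
  proof
    assume h: "b!i!j = b!i!(j+1)"
    then have "{b!i!j} \<in> edges (b!i)" using j unfolding edges_def by auto
    then show False using cl i unfolding has_self_edge_def by auto
  qed
  moreover have "b!i!j \<in> set (b!i)" "b!i!(j+1) \<in> set (b!i)" using j by auto
  then have "b!i!j \<in> V" "b!i!(j+1) \<in> V" using i unfolding V_def by auto
  ultimately show ?thesis using j by blast
qed

lemma R_sym: "(x,y) \<in> R \<Longrightarrow> (y,x) \<in> R" unfolding R_def by (simp add: insert_commute)
lemma R_V: assumes "(x,y) \<in> R" shows "x \<in> V \<and> y \<in> V \<and> x \<noteq> y"
proof -
  have "{x,y} \<in> E" using assms unfolding R_def by simp
  then obtain x' y' where "{x,y} = {x',y'}" "x' \<noteq> y'" "x' \<in> V" "y' \<in> V" using E_shape by blast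
  then show ?thesis by (auto simp: doubleton_eq_iff)
qed

lemma reach_word: "i < n \<Longrightarrow> j < length (b!i) \<Longrightarrow> (1, b!i!j) \<in> R\<^sup>*"
proof (induction j)
  case 0
  then have "b!i!0 = 1" using cl by (metis hd_conv_nth)
  then show ?case by simp
next
  case (Suc j)
  have "{b!i!j, b!i!Suc j} \<in> edges (b!i)" using Suc.prems unfolding edges_def by force
  then have "(b!i!j, b!i!Suc j) \<in> R" using edges_sub_E[OF Suc.prems(1)] unfolding R_def by auto
  then show ?case using Suc by (meson Suc_lessD rtrancl.rtrancl_into_rtrancl)
qed

lemma reach: assumes "v \<in> V" shows "(1, v) \<in> R\<^sup>*"
proof -
  obtain i where "i < n" "v \<in> set (b!i)" using assms unfolding V_def by auto
  then obtain j where "j < length (b!i)" "v = b!i!j" by (auto simp: in_set_conv_nth)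
  then show ?thesis using reach_word \<open>i < n\<close> by blast
qed

definition "d v = (LEAST m. (1, v) \<in> R ^^ m)"
definition "par v = (if v = 1 then 1 else SOME u. (u, v) \<in> R \<and> d u < d v)"

lemma par_ex: assumes "v \<in> V" "v \<noteq> 1" shows "\<exists>u. (u, v) \<in> R \<and> d u < d v"
proof -
  obtain m where m: "(1,v) \<in> R ^^ m" using reach[OF assms(1)] rtrancl_power by blast
  have dv: "(1,v) \<in> R ^^ d v" unfolding d_def using m by (rule LeastI)
  have "d v \<noteq> 0"
  proof
    assume "d v = 0"
    then have "(1,v) \<in> R^^0" using dv by simp
    then show False using assms(2) by simp
  qed
  then obtain m' where m': "d v = Suc m'" using not0_implies_Suc by blast
  then obtain u where u: "(1,u) \<in> R ^^ m'" "(u,v) \<in> R" using dv by auto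
  have "d u \<le> m'" unfolding d_def using u(1) by (rule Least_le)
  then show ?thesis using u m' by auto
qed

lemma par_prop: assumes "v \<in> V" "v \<noteq> 1" shows "(par v, v) \<in> R" "d (par v) < d v"
  using someI_ex[OF par_ex[OF assms]] assms(2) unfolding par_def by auto

lemma par_V: "v \<in> V \<Longrightarrow> par v \<in> V"
  using par_prop R_V by (cases "v = 1") (auto simp: par_def)

lemma par_le: "v \<in> V \<Longrightarrow> d (par v) \<le> d v"
  using par_prop by (cases "v = 1") (auto simp: par_def intro: less_imp_le)

lemma parpow_V: "v \<in> V \<Longrightarrow> (par ^^ m) v \<in> V"
  by (induction m) (auto simp: par_V)

lemma parpow_le: "v \<in> V \<Longrightarrow> d ((par ^^ m) v) \<le> d v"
proof (induction m arbitrary: v)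
  case 0 then show ?case by simp
next
  case (Suc m)
  have "d ((par ^^ Suc m) v) = d ((par ^^ m) (par v))" by (simp add: funpow_Suc_right del: funpow.simps)
  also have "\<dots> \<le> d (par v)" using Suc par_V by blast
  also have "\<dots> \<le> d v" using par_le Suc by blast
  finally show ?case .
qed

lemma parpow_lt: "v \<in> V \<Longrightarrow> v \<noteq> 1 \<Longrightarrow> d ((par ^^ Suc m) v) < d v"
proof -
  assume a: "v \<in> V" "v \<noteq> 1"
  have "d ((par ^^ Suc m) v) = d ((par ^^ m) (par v))" by (simp add: funpow_Suc_right del: funpow.simps)
  also have "\<dots> \<le> d (par v)" using a par_V parpow_le by blast
  also have "\<dots> < d v" using par_prop a by blast
  finally show ?thesis .
qed

lemma parpow_one: "(par ^^ m) 1 = 1"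
  by (induction m) (auto simp: par_def)

definition "desc v = {w \<in> V. \<exists>m. (par ^^ m) w = v}"
definition "D = (\<lambda>v. {par v, v}) ` (V - {1})"

lemma D_cross: assumes "v \<in> V - {1}" "w \<in> V - {1}"
  shows "cross (desc v) {par w, w} \<longleftrightarrow> w = v"
proof
  assume "w = v"
  have "v \<in> desc v" using assms unfolding desc_def by (auto intro: exI[of _ 0])
  moreover have "par v \<notin> desc v"
  proof
    assume "par v \<in> desc v"
    then obtain m where "(par ^^ m) (par v) = v" unfolding desc_def by auto
    then have "(par ^^ Suc m) v = v" by (simp add: funpow_Suc_right del: funpow.simps)
    then show False using parpow_lt[of v m] assms by auto
  qed
  ultimately show "cross (desc v) {par w, w}" using \<open>w = v\<close> by (auto simp: cross_pair)
next
  assume cr: "cross (desc v) {par w, w}"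
  show "w = v"
  proof (cases "w \<in> desc v")
    case True
    then obtain m where m: "(par ^^ m) w = v" unfolding desc_def by auto
    show ?thesis
    proof (cases m)
      case 0 then show ?thesis using m by simp
    next
      case (Suc m')
      then have "(par ^^ m') (par w) = v" using m by (simp add: funpow_Suc_right del: funpow.simps)
      then have "par w \<in> desc v" using par_V assms unfolding desc_def by auto
      then show ?thesis using cr True by (auto simp: cross_pair)
    qed
  next
    case False
    then have "par w \<in> desc v" using cr by (auto simp: cross_pair)
    then obtain m where m: "(par ^^ m) (par w) = v" unfolding desc_def by auto
    then have "(par ^^ Suc m) w = v" by (simp add: funpow_Suc_right del: funpow.simps)
    then have "w \<in> desc v" using assms unfolding desc_def by blast
    then show ?thesis using False by simp
  qed
qed

lemma D_inj: "inj_on (\<lambda>v. {par v, v}) (V - {1})"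
proof (rule inj_onI)
  fix v w assume a: "v \<in> V - {1}" "w \<in> V - {1}" "{par v, v} = {par w, w}"
  have "cross (desc v) {par v, v}" using D_cross[OF a(1) a(1)] by simp
  then have "cross (desc v) {par w, w}" using a(3) by simp
  then show "v = w" using D_cross[OF a(1) a(2)] by simp
qed

lemma card_D: "card D = card V - 1"
  unfolding D_def using card_image[OF D_inj] finV oneV by simp

lemma D_sub_E: "D \<subseteq> E"
  unfolding D_def using par_prop unfolding R_def by auto

lemma finD: "finite D" using finite_subset[OF D_sub_E finE] .

lemma sep: assumes "x \<in> V" "y \<in> V" "x \<noteq> y" shows "\<exists>v\<in>V-{1}. cross (desc v) {x,y}"
proof -
  have xin: "x \<in> desc x" "y \<in> desc y" using assms unfolding desc_def by (auto intro: exI[of _ 0])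
  show ?thesis
  proof (cases "x \<noteq> 1 \<and> y \<notin> desc x")
    case True then show ?thesis using xin assms by (auto simp: cross_pair)
  next
    case F1: False
    show ?thesis
    proof (cases "y \<noteq> 1 \<and> x \<notin> desc y")
      case True then show ?thesis using xin assms by (auto simp: cross_pair insert_commute)
    next
      case F2: False
      have "False"
      proof (cases "x = 1 \<or> y = 1")
        case True
        then show False
        proof
          assume "x = 1"
          then have "x \<in> desc y" using F2 assms by auto
          then show False using \<open>x = 1\<close> parpow_one assms unfolding desc_def by auto
        next
          assume "y = 1"
          then have "y \<in> desc x" using F1 assms by auto
          then show False using \<open>y = 1\<close> parpow_one assms unfolding desc_def by auto
        qed
      next
        case False
        then have "y \<in> desc x" "x \<in> desc y" using F1 F2 by auto
        then obtain m m' where m: "(par ^^ m) y = x" "(par ^^ m') x = y" unfolding desc_def by auto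
        then obtain m1 m1' where "m = Suc m1" "m' = Suc m1'" using assms(3)
          by (metis funpow_0 not0_implies_Suc)
        then have "d x < d y" "d y < d x" using parpow_lt m assms False by metis+
        then show False by simp
      qed
      then show ?thesis ..
    qed
  qed
qed

lemma cut_split: assumes v: "v \<in> V - {1}" and i: "i < n"
  shows "(\<Sum>e\<in>{e\<in>E. cross (desc v) e}. c i e) = c i {par v, v} + (\<Sum>e\<in>{e\<in>E-D. cross (desc v) e}. c i e)"
proof -
  have "{e\<in>E. cross (desc v) e} = insert {par v, v} {e\<in>E-D. cross (desc v) e}"
  proof
    show "{e\<in>E. cross (desc v) e} \<subseteq> insert {par v, v} {e\<in>E-D. cross (desc v) e}"
    proof
      fix e assume e: "e \<in> {e\<in>E. cross (desc v) e}"
      show "e \<in> insert {par v, v} {e\<in>E-D. cross (desc v) e}"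
      proof (cases "e \<in> D")
        case True
        then obtain w where w: "w \<in> V - {1}" "e = {par w, w}" unfolding D_def by auto
        then have "w = v" using D_cross[OF v w(1)] e by auto
        then show ?thesis using w by simp
      qed (use e in auto)
    qed
    show "insert {par v, v} {e\<in>E-D. cross (desc v) e} \<subseteq> {e\<in>E. cross (desc v) e}"
      using D_cross[OF v v] D_sub_E v unfolding D_def by auto
  qed
  moreover have "{par v, v} \<notin> {e\<in>E-D. cross (desc v) e}" using v unfolding D_def by auto
  ultimately show ?thesis using finE by simp
qed

lemma word_parity: assumes v: "v \<in> V - {1}" and i: "i < n"
  shows "even (c i {par v, v} + (\<Sum>e\<in>{e\<in>E-D. cross (desc v) e}. c i e))"
proof -
  have "b!i \<noteq> []" "hd (b!i) = last (b!i)" using cl i by auto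
  from cut_parity[OF this finE edges_sub_E[OF i], of "desc v"]
  show ?thesis using cut_split[OF v i] by simp
qed

end


lemma sum_eq_1_nat:
  fixes f :: "'a \<Rightarrow> nat"
  assumes "finite S" "sum f S = 1"
  shows "\<exists>x\<in>S. f x = 1 \<and> (\<forall>y\<in>S. y \<noteq> x \<longrightarrow> f y = 0)"
proof -
  obtain x where x: "x \<in> S" "f x \<noteq> 0"
    using assms by (metis sum.neutral zero_neq_one)
  have "sum f S = f x + sum f (S - {x})" using assms(1) x(1) by (rule sum.remove)
  then have "f x = 1" "sum f (S - {x}) = 0" using assms x by linarith+
  then have "\<forall>y\<in>S - {x}. f y = 0" using assms(1) by simp
  then show ?thesis using x \<open>f x = 1\<close> by auto
qed

context clt_sent begin

definition "TW = {i. i < n \<and> edges (b!i) \<subseteq> D}"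
definition "CW = {i. i < n \<and> \<not> edges (b!i) \<subseteq> D}"
definition "pe i = (SOME e. e \<in> edges (b!i) \<and> (\<exists>j<n. j \<noteq> i \<and> e \<in> edges (b!j)))"
definition "Af e = {i \<in> TW. pe i = e}"
definition "u i = (\<Sum>e\<in>E-D. c i e)"
definition "T = (\<Sum>i<n. length (b!i) - 1)"

lemma finTW: "finite TW" unfolding TW_def by simp
lemma finCW: "finite CW" unfolding CW_def by simp
lemma finAf: "finite (Af e)" unfolding Af_def using finTW by simp

lemma pe_prop: assumes "i < n" shows "pe i \<in> edges (b!i)" "\<exists>j<n. j \<noteq> i \<and> pe i \<in> edges (b!j)"
proof -
  have "\<exists>e. e \<in> edges (b!i) \<and> (\<exists>j<n. j \<noteq> i \<and> e \<in> edges (b!j))" using share assms by blast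
  from someI_ex[OF this] show "pe i \<in> edges (b!i)" "\<exists>j<n. j \<noteq> i \<and> pe i \<in> edges (b!j)"
    unfolding pe_def by auto
qed

lemma pe_D: "i \<in> TW \<Longrightarrow> pe i \<in> D" using pe_prop unfolding TW_def by auto

lemma D_elem: "e \<in> D \<Longrightarrow> \<exists>v\<in>V-{1}. e = {par v, v}" unfolding D_def by auto

lemma tree_even: assumes i: "i \<in> TW" and e: "e \<in> D" shows "even (c i e)"
proof -
  obtain v where v: "v \<in> V-{1}" "e = {par v, v}" using D_elem[OF e] by blast
  have "(\<Sum>e\<in>{e\<in>E-D. cross (desc v) e}. c i e) = 0"
    using i unfolding TW_def by (auto intro!: sum.neutral edge_count_zero)
  then show ?thesis using word_parity[OF v(1)] i v(2) unfolding TW_def by auto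
qed

lemma tree_ge2: assumes "i \<in> TW" "e \<in> edges (b!i)" shows "2 \<le> c i e"
proof -
  have "0 < c i e" using assms(2) edge_count_pos by blast
  moreover have "e \<in> D" using assms unfolding TW_def by auto
  moreover have "even (c i e)" using tree_even[OF assms(1) \<open>e \<in> D\<close>] .
  then have "c i e \<noteq> 1" by auto
  ultimately show ?thesis by linarith
qed

lemma T_eq: "T = (\<Sum>e\<in>E. k e)"
proof -
  have "(\<Sum>e\<in>E. k e) = (\<Sum>e\<in>E. \<Sum>i<n. c i e)" by (simp add: k_def')
  also have "\<dots> = (\<Sum>i<n. \<Sum>e\<in>E. c i e)" by (rule sum.swap)
  also have "\<dots> = T" unfolding T_def
    by (rule sum.cong[OF refl]) (use sum_edge_count_all[OF finE edges_sub_E] in auto)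
  finally show ?thesis by simp
qed

lemma T_split: "T = (\<Sum>e\<in>D. k e) + (\<Sum>i<n. u i)"
proof -
  have "(\<Sum>e\<in>E. k e) = (\<Sum>e\<in>D. k e) + (\<Sum>e\<in>E-D. k e)"
    using sum.subset_diff[OF D_sub_E finE, of k] by (simp add: add.commute)
  moreover have "(\<Sum>e\<in>E-D. k e) = (\<Sum>i<n. u i)"
    unfolding u_def k_def' by (rule sum.swap)
  ultimately show ?thesis using T_eq by simp
qed

lemma u_TW: "i \<in> TW \<Longrightarrow> u i = 0"
  unfolding u_def TW_def by (auto intro!: sum.neutral edge_count_zero)

lemma u_CW: assumes "i \<in> CW" shows "1 \<le> u i"
proof -
  obtain e where e: "e \<in> edges (b!i)" "e \<notin> D" using assms unfolding CW_def by auto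
  have "e \<in> E - D" using e edges_sub_E assms unfolding CW_def by auto
  then have "c i e \<le> u i" unfolding u_def using finE by (intro member_le_sum) auto
  moreover have "0 < c i e" using e edge_count_pos by blast
  ultimately show ?thesis by simp
qed

lemma k_split: assumes "S \<subseteq> {..<n}" shows "k e = (\<Sum>i\<in>S. c i e) + (\<Sum>i\<in>{..<n}-S. c i e)"
  unfolding k_def' using sum.subset_diff[OF assms, of "\<lambda>i. c i e"] by (simp add: add.commute)

lemma Af_sum: "e \<in> D \<Longrightarrow> 2 * card (Af e) \<le> (\<Sum>i\<in>Af e. c i e)"
proof -
  have "(\<Sum>i\<in>Af e. 2) \<le> (\<Sum>i\<in>Af e. c i e)"
    by (rule sum_mono) (auto simp: Af_def intro: tree_ge2 pe_prop simp: TW_def)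
  then show ?thesis by (simp add: mult.commute)
qed

lemma Af_sub: "Af e \<subseteq> {..<n}" unfolding Af_def TW_def by auto

lemma kD_ge: assumes e: "e \<in> D" shows "2 + card (Af e) \<le> k e"
proof -
  have ks: "k e = (\<Sum>i\<in>Af e. c i e) + (\<Sum>i\<in>{..<n}-Af e. c i e)" by (rule k_split[OF Af_sub])
  have A2: "2 * card (Af e) \<le> (\<Sum>i\<in>Af e. c i e)" by (rule Af_sum[OF e])
  consider "card (Af e) = 0" | "card (Af e) = 1" | "2 \<le> card (Af e)" by linarith
  then show ?thesis
  proof cases
    case 1
    then show ?thesis using cnt2 e D_sub_E by auto
  next
    case 2
    then obtain i0 where i0: "Af e = {i0}" using card_1_singletonE by blast
    then have "i0 < n" "pe i0 = e" using Af_sub unfolding Af_def by auto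
    then obtain j where j: "j < n" "j \<noteq> i0" "e \<in> edges (b!j)" using pe_prop by blast
    have "c j e \<le> (\<Sum>i\<in>{..<n}-Af e. c i e)" using j i0 by (intro member_le_sum) auto
    moreover have "0 < c j e" using j edge_count_pos by blast
    ultimately show ?thesis using ks A2 2 by linarith
  next
    case 3
    then show ?thesis using ks A2 by linarith
  qed
qed

lemma card_TW_sum: "(\<Sum>e\<in>D. card (Af e)) = card TW"
proof -
  have "(\<Sum>e\<in>D. \<Sum>i\<in>{x \<in> TW. pe x = e}. (1::nat)) = (\<Sum>i\<in>TW. 1)"
    by (rule sum.group[OF finTW finD]) (auto intro: pe_D)
  then show ?thesis unfolding Af_def by simp
qed

lemma n_split: "n = card TW + card CW"
proof -
  have "{..<n} = TW \<union> CW" "TW \<inter> CW = {}" unfolding TW_def CW_def by auto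
  then show ?thesis using card_Un_disjoint[OF finTW finCW] by (metis card_lessThan)
qed

lemma sumD_ge: "2 * card D + card TW \<le> (\<Sum>e\<in>D. k e)"
proof -
  have "(\<Sum>e\<in>D. 2 + card (Af e)) \<le> (\<Sum>e\<in>D. k e)" by (rule sum_mono) (rule kD_ge)
  moreover have "(\<Sum>e\<in>D. 2 + card (Af e)) = 2 * card D + (\<Sum>e\<in>D. card (Af e))"
    by (subst sum.distrib) simp
  ultimately show ?thesis using card_TW_sum by simp
qed

lemma sumu_eq: "(\<Sum>i<n. u i) = (\<Sum>i\<in>CW. u i)"
proof -
  have "{..<n} = TW \<union> CW" "TW \<inter> CW = {}" unfolding TW_def CW_def by auto
  then have "(\<Sum>i<n. u i) = (\<Sum>i\<in>TW. u i) + (\<Sum>i\<in>CW. u i)"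
    using sum.union_disjoint[OF finTW finCW] by metis
  then show ?thesis using u_TW by simp
qed

lemma sumu_ge: "card CW \<le> (\<Sum>i<n. u i)"
proof -
  have "(\<Sum>i\<in>CW. 1) \<le> (\<Sum>i\<in>CW. u i)" by (rule sum_mono) (rule u_CW)
  then show ?thesis using sumu_eq by simp
qed

theorem main_ineq: "2 * card V + n \<le> T + 2"
proof -
  have "card V \<ge> 1" using finV oneV by (metis One_nat_def Suc_leI card_gt_0_iff empty_iff)
  then have "2 * card V = 2 * card D + 2" using card_D by simp
  then show ?thesis using T_split sumD_ge sumu_ge n_split by linarith
qed

end


context clt_sent begin

definition "g i = (SOME g. g \<in> E-D \<and> c i g = 1 \<and> (\<forall>g'\<in>E-D. g' \<noteq> g \<longrightarrow> c i g' = 0))"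
definition "G g0 = {j \<in> CW. g j = g0}"

lemma finG: "finite (G g0)" unfolding G_def using finCW by simp
lemma G_sub: "G g0 \<subseteq> {..<n}" unfolding G_def CW_def by auto

lemma TW_CW: "i < n \<Longrightarrow> i \<in> TW \<or> i \<in> CW" unfolding TW_def CW_def by auto
lemma TW_not_CW: "i \<in> TW \<Longrightarrow> i \<notin> CW" unfolding TW_def CW_def by auto

context
  assumes tight: "2 * card V + n = T + 2"
begin

lemma tight_parts: "(\<Sum>e\<in>D. k e) = 2 * card D + card TW" "(\<Sum>i<n. u i) = card CW"
proof -
  have "card V \<ge> 1" using finV oneV by (metis One_nat_def Suc_leI card_gt_0_iff empty_iff)
  then have "2 * card V = 2 * card D + 2" using card_D by simp
  then show "(\<Sum>e\<in>D. k e) = 2 * card D + card TW" "(\<Sum>i<n. u i) = card CW"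
    using T_split sumD_ge sumu_ge n_split tight by linarith+
qed

lemma Q1: assumes "e \<in> D" shows "k e = 2 + card (Af e)"
proof (rule ccontr)
  assume a: "k e \<noteq> 2 + card (Af e)"
  have "(\<Sum>e\<in>D. 2 + card (Af e)) < (\<Sum>e\<in>D. k e)"
  proof (rule sum_strict_mono_ex1[OF finD])
    show "\<forall>x\<in>D. 2 + card (Af x) \<le> k x" using kD_ge by blast
    have "2 + card (Af e) < k e" using kD_ge[OF assms] a by linarith
    then show "\<exists>x\<in>D. 2 + card (Af x) < k x" using assms by blast
  qed
  moreover have "(\<Sum>e\<in>D. 2 + card (Af e)) = 2 * card D + (\<Sum>e\<in>D. card (Af e))"
    by (subst sum.distrib) simp
  ultimately show False using card_TW_sum tight_parts by simp
qed

lemma Q2: assumes "i \<in> CW" shows "u i = 1"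
proof (rule ccontr)
  assume a: "u i \<noteq> 1"
  have "(\<Sum>i\<in>CW. 1) < (\<Sum>i\<in>CW. u i)"
  proof (rule sum_strict_mono_ex1[OF finCW])
    show "\<forall>x\<in>CW. 1 \<le> u x" using u_CW by blast
    have "1 < u i" using u_CW[OF assms] a by linarith
    then show "\<exists>x\<in>CW. 1 < u x" using assms by blast
  qed
  then show False using sumu_eq tight_parts by simp
qed

lemma g_prop: assumes "i \<in> CW"
  shows "g i \<in> E-D" "c i (g i) = 1" "\<And>g'. g' \<in> E-D \<Longrightarrow> g' \<noteq> g i \<Longrightarrow> c i g' = 0"
proof -
  have "finite (E - D)" using finE by simp
  from sum_eq_1_nat[OF this, of "c i"] Q2[OF assms]
  have "\<exists>g. g \<in> E-D \<and> c i g = 1 \<and> (\<forall>g'\<in>E-D. g' \<noteq> g \<longrightarrow> c i g' = 0)" unfolding u_def by blast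
  from someI_ex[OF this]
  show "g i \<in> E-D" "c i (g i) = 1" "\<And>g'. g' \<in> E-D \<Longrightarrow> g' \<noteq> g i \<Longrightarrow> c i g' = 0"
    unfolding g_def by auto
qed

lemma c_nonD: assumes "i \<in> CW" "e \<in> E - D" shows "c i e = (if e = g i then 1 else 0)"
  using g_prop[OF assms(1)] assms(2) by auto

lemma P3: assumes i: "i \<in> CW" and v: "v \<in> V - {1}"
  shows "odd (c i {par v, v}) \<longleftrightarrow> cross (desc v) (g i)"
proof -
  have "(\<Sum>e\<in>{e\<in>E-D. cross (desc v) e}. c i e) = (\<Sum>e\<in>{e\<in>E-D. cross (desc v) e}. if g i = e then 1 else 0)"
    by (rule sum.cong[OF refl]) (use c_nonD[OF i] in auto)
  also have "\<dots> = (if g i \<in> {e\<in>E-D. cross (desc v) e} then 1 else 0)"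
    using finE by (simp add: sum.delta)
  also have "\<dots> = (if cross (desc v) (g i) then 1 else 0)" using g_prop(1)[OF i] by simp
  finally show ?thesis using word_parity[OF v] i unfolding CW_def by auto
qed

lemma P4: assumes "g0 \<in> E - D" shows "k g0 = card (G g0)"
proof -
  have "k g0 = (\<Sum>i<n. if i \<in> CW \<and> g i = g0 then 1 else 0)"
    unfolding k_def'
  proof (rule sum.cong[OF refl])
    fix i assume "i \<in> {..<n}"
    then consider "i \<in> TW" | "i \<in> CW" using TW_CW by auto
    then show "c i g0 = (if i \<in> CW \<and> g i = g0 then 1 else 0)"
    proof cases
      case 1 then show ?thesis using assms TW_not_CW[OF 1] unfolding TW_def
        by (auto intro: edge_count_zero)
    next
      case 2 then show ?thesis using c_nonD[OF 2 assms] by auto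
    qed
  qed
  also have "\<dots> = card {i \<in> {..<n}. i \<in> CW \<and> g i = g0}"
    by (simp add: sum.inter_filter[symmetric])
  also have "{i \<in> {..<n}. i \<in> CW \<and> g i = g0} = G g0" unfolding G_def CW_def by auto
  finally show ?thesis .
qed

lemma G_ge2: assumes "i \<in> CW" shows "2 \<le> card (G (g i))" "i \<in> G (g i)"
proof -
  show "2 \<le> card (G (g i))" using P4[OF g_prop(1)[OF assms]] cnt2 g_prop(1)[OF assms] by auto
  show "i \<in> G (g i)" using assms unfolding G_def by auto
qed

lemma U: assumes e: "e \<in> D" and j: "j \<in> CW" and odd: "odd (c j e)"
  shows "Af e = {}" "k e = 2" "card (G (g j)) \<le> 2" "\<And>j'. j' \<in> G (g j) \<Longrightarrow> odd (c j' e)"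
proof -
  obtain v where v: "v \<in> V-{1}" "e = {par v, v}" using D_elem[OF e] by blast
  have cr: "cross (desc v) (g j)" using P3[OF j v(1)] odd v(2) by simp
  show oddG: "\<And>j'. j' \<in> G (g j) \<Longrightarrow> odd (c j' e)"
  proof -
    fix j' assume "j' \<in> G (g j)"
    then have "j' \<in> CW" "g j' = g j" unfolding G_def by auto
    then show "odd (c j' e)" using P3[OF _ v(1)] cr v(2) by auto
  qed
  have disj: "Af e \<inter> G (g j) = {}" unfolding Af_def G_def using TW_not_CW by auto
  have sub: "Af e \<union> G (g j) \<subseteq> {..<n}" using Af_sub G_sub by auto
  have "k e \<ge> (\<Sum>i\<in>Af e \<union> G (g j). c i e)" using k_split[OF sub, of e] by simp
  also have "(\<Sum>i\<in>Af e \<union> G (g j). c i e) = (\<Sum>i\<in>Af e. c i e) + (\<Sum>i\<in>G (g j). c i e)"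
    using sum.union_disjoint[OF finAf finG disj] .
  finally have k1: "(\<Sum>i\<in>Af e. c i e) + (\<Sum>i\<in>G (g j). c i e) \<le> k e" .
  have "(\<Sum>i\<in>G (g j). 1) \<le> (\<Sum>i\<in>G (g j). c i e)"
  proof (rule sum_mono)
    fix x assume "x \<in> G (g j)"
    then have "odd (c x e)" by (rule oddG)
    then have "c x e \<noteq> 0" by (metis even_zero)
    then show "1 \<le> c x e" by simp
  qed
  then have k2: "card (G (g j)) \<le> (\<Sum>i\<in>G (g j). c i e)" by simp
  have "2 \<le> card (G (g j))" using G_ge2[OF j] by simp
  then have "card (Af e) = 0" using k1 k2 Af_sum[OF e] Q1[OF e] by linarith
  then show "Af e = {}" using finAf by simp
  then show "k e = 2" using Q1[OF e] by simp
  then show "card (G (g j)) \<le> 2" using k1 k2 by linarith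
qed

lemma Vlem: assumes e: "e \<in> D" and ne: "Af e \<noteq> {}"
  shows "card (Af e) = 2" "\<And>i. i < n \<Longrightarrow> i \<notin> Af e \<Longrightarrow> c i e = 0"
proof -
  have ks: "k e = (\<Sum>i\<in>Af e. c i e) + (\<Sum>i\<in>{..<n}-Af e. c i e)" by (rule k_split[OF Af_sub])
  have A2: "2 * card (Af e) \<le> (\<Sum>i\<in>Af e. c i e)" by (rule Af_sum[OF e])
  have c1: "card (Af e) \<ge> 1" using ne finAf by (metis One_nat_def Suc_leI card_gt_0_iff)
  have c2: "card (Af e) = 2"
  proof (rule ccontr)
    assume "card (Af e) \<noteq> 2"
    then have "card (Af e) = 1" using ks A2 Q1[OF e] c1 by linarith
    then obtain i0 where i0: "Af e = {i0}" using card_1_singletonE by blast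
    then have "i0 < n" "pe i0 = e" using Af_sub unfolding Af_def by auto
    then obtain j where j: "j < n" "j \<noteq> i0" "e \<in> edges (b!j)" using pe_prop by blast
    have "c j e \<le> (\<Sum>i\<in>{..<n}-Af e. c i e)" using j i0 by (intro member_le_sum) auto
    moreover have "0 < c j e" using j edge_count_pos by blast
    ultimately have cj: "c j e = 1" using ks A2 Q1[OF e] \<open>card (Af e) = 1\<close> by linarith
    consider "j \<in> TW" | "j \<in> CW" using TW_CW j by auto
    then show False
    proof cases
      case 1 then show False using tree_even[OF 1 e] cj by simp
    next
      case 2 then show False using U(1)[OF e 2] cj ne by simp
    qed
  qed
  show "card (Af e) = 2" by (rule c2)
  have "(\<Sum>i\<in>{..<n}-Af e. c i e) = 0" using ks A2 Q1[OF e] c2 by linarith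
  then show "\<And>i. i < n \<Longrightarrow> i \<notin> Af e \<Longrightarrow> c i e = 0" by simp
qed

lemma partner_TW: assumes i: "i \<in> TW" and j: "j < n" "j \<noteq> i" and h: "h \<in> edges (b!i)" "h \<in> edges (b!j)"
  shows "j \<in> Af (pe i)"
proof -
  have iN: "i < n" using i unfolding TW_def by auto
  have hD: "h \<in> D" using i h unfolding TW_def by auto
  have "c i h \<ge> 2" using tree_ge2[OF i h(1)] .
  moreover have "c j h \<ge> 1" using h(2) edge_count_pos by (metis One_nat_def Suc_leI)
  moreover have "(\<Sum>x\<in>{i,j}. c x h) \<le> k h" using k_split[of "{i,j}" h] iN j by auto
  ultimately have "3 \<le> k h" using j by simp
  then have ne: "Af h \<noteq> {}" using Q1[OF hD] by auto
  have "0 < c i h" using h(1) edge_count_pos by blast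
  then have "i \<in> Af h" using Vlem(2)[OF hD ne iN] by (metis less_numeral_extra(3))
  then have "pe i = h" unfolding Af_def by simp
  moreover have "0 < c j h" using h(2) edge_count_pos by blast
  then have "j \<in> Af h" using Vlem(2)[OF hD ne j(1)] by (metis less_numeral_extra(3))
  ultimately show ?thesis by simp
qed

lemma card_G_le2: assumes i: "i \<in> CW" shows "card (G (g i)) \<le> 2"
proof -
  have "g i \<in> E" using g_prop(1)[OF i] by simp
  then obtain x y where xy: "g i = {x,y}" "x \<noteq> y" "x \<in> V" "y \<in> V" using E_shape by blast
  then obtain v where v: "v \<in> V-{1}" "cross (desc v) {x,y}" using sep by blast
  then have "odd (c i {par v, v})" using P3[OF i v(1)] xy by simp
  moreover have "{par v, v} \<in> D" using v unfolding D_def by auto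
  ultimately show ?thesis using U(3) i by blast
qed

lemma partner_CW: assumes i: "i \<in> CW" and j: "j < n" "j \<noteq> i" and h: "h \<in> edges (b!i)" "h \<in> edges (b!j)"
  shows "j \<in> G (g i)"
proof (cases "h \<in> D")
  case False
  have iN: "i < n" using i unfolding CW_def by auto
  have hE: "h \<in> E - D" using False h edges_sub_E iN by auto
  have "h = g i" using c_nonD[OF i hE] h(1) edge_count_pos by (metis less_numeral_extra(3))
  have jC: "j \<in> CW" using h(2) False j unfolding CW_def by auto
  have "h = g j" using c_nonD[OF jC hE] h(2) edge_count_pos by (metis less_numeral_extra(3))
  then show ?thesis using jC \<open>h = g i\<close> unfolding G_def by auto
next
  case hD: True
  have iN: "i < n" using i unfolding CW_def by auto
  obtain v where v: "v \<in> V-{1}" "h = {par v, v}" using D_elem[OF hD] by blast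
  have Ae: "Af h = {}"
  proof (rule ccontr)
    assume ne: "Af h \<noteq> {}"
    have "i \<notin> Af h" using i TW_not_CW unfolding Af_def by auto
    then have "c i h = 0" using Vlem(2)[OF hD ne iN] by blast
    moreover have "0 < c i h" using h(1) edge_count_pos by blast
    ultimately show False by simp
  qed
  then have kh: "k h = 2" using Q1[OF hD] by simp
  have ci: "c i h \<ge> 1" "c j h \<ge> 1" using h edge_count_pos by (metis One_nat_def Suc_leI)+
  have ks: "k h = (\<Sum>x\<in>{i,j}. c x h) + (\<Sum>x\<in>{..<n}-{i,j}. c x h)" using k_split[of "{i,j}" h] iN j by auto
  have s2: "(\<Sum>x\<in>{i,j}. c x h) = c i h + c j h" using j by simp
  have "c i h = 1" "(\<Sum>x\<in>{..<n}-{i,j}. c x h) = 0" using ks kh ci s2 by linarith+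
  then have zero: "\<And>x. x < n \<Longrightarrow> x \<noteq> i \<Longrightarrow> x \<noteq> j \<Longrightarrow> c x h = 0"
    by (simp add: sum_eq_0_iff)
  have cr: "cross (desc v) (g i)" using P3[OF i v(1)] v(2) \<open>c i h = 1\<close> by simp
  have "2 \<le> card (G (g i))" using G_ge2[OF i] by simp
  then obtain j' where j': "j' \<in> G (g i)" "j' \<noteq> i"
    by (metis card_2_iff' card_le_Suc0_iff_eq finG insert_absorb insert_not_empty not_less_eq_eq numeral_2_eq_2 order_refl)
  then have j'C: "j' \<in> CW" "g j' = g i" unfolding G_def by auto
  then have "odd (c j' h)" using P3[OF _ v(1)] cr v(2) by auto
  then have "c j' h \<noteq> 0" by (metis even_zero)
  then have "j' = j" using zero j' j'C unfolding CW_def by auto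
  then show ?thesis using j' by simp
qed

theorem unique_partner:
  assumes i: "i < n" and j1: "j1 < n" "j1 \<noteq> i" "edges (b!i) \<inter> edges (b!j1) \<noteq> {}"
    and j2: "j2 < n" "j2 \<noteq> i" "edges (b!i) \<inter> edges (b!j2) \<noteq> {}"
  shows "j1 = j2"
proof -
  obtain h1 where h1: "h1 \<in> edges (b!i)" "h1 \<in> edges (b!j1)" using j1 by blast
  obtain h2 where h2: "h2 \<in> edges (b!i)" "h2 \<in> edges (b!j2)" using j2 by blast
  consider "i \<in> TW" | "i \<in> CW" using TW_CW i by auto
  then show ?thesis
  proof cases
    case 1
    have m: "j1 \<in> Af (pe i) - {i}" "j2 \<in> Af (pe i) - {i}"
      using partner_TW[OF 1 j1(1,2) h1] partner_TW[OF 1 j2(1,2) h2] j1 j2 by auto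
    have "i \<in> Af (pe i)" using 1 unfolding Af_def by simp
    then have "card (Af (pe i)) = 2" using Vlem(1)[OF pe_D[OF 1]] by blast
    then have "card (Af (pe i) - {i}) = 1" using \<open>i \<in> Af (pe i)\<close> finAf by simp
    then show ?thesis using m by (metis card_1_singletonE singletonD)
  next
    case 2
    have m: "j1 \<in> G (g i) - {i}" "j2 \<in> G (g i) - {i}"
      using partner_CW[OF 2 j1(1,2) h1] partner_CW[OF 2 j2(1,2) h2] j1 j2 by auto
    have "card (G (g i) - {i}) \<le> 1" using card_G_le2[OF 2] G_ge2(2)[OF 2] finG by auto
    moreover have "finite (G (g i) - {i})" using finG by simp
    ultimately have "\<forall>a1\<in>G (g i) - {i}. \<forall>a2\<in>G (g i) - {i}. a1 = a2"
      using card_le_Suc0_iff_eq by (metis One_nat_def)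
    then show ?thesis using m by blast
  qed
qed

end
end


lemma card_UN_eq_disj:
  assumes I: "finite I" and fin: "\<forall>i\<in>I. finite (X i)"
    and eq: "card (\<Union>(X ` I)) = (\<Sum>i\<in>I. card (X i))"
    and r: "r \<in> I" "r' \<in> I" "r \<noteq> r'"
  shows "X r \<inter> X r' = {}"
proof (rule ccontr)
  assume ne: "X r \<inter> X r' \<noteq> {}"
  define J where "J = I - {r, r'}"
  have IJ: "I = insert r (insert r' J)" "r \<notin> insert r' J" "r' \<notin> J" using r unfolding J_def by auto
  have fJ: "finite J" using I unfolding J_def by simp
  have "\<Union>(X ` I) = (X r \<union> X r') \<union> \<Union>(X ` J)" using IJ by auto
  then have "card (\<Union>(X ` I)) \<le> card (X r \<union> X r') + card (\<Union>(X ` J))" by (metis card_Un_le)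
  also have "card (\<Union>(X ` J)) \<le> (\<Sum>i\<in>J. card (X i))" using card_UN_le[OF fJ] .
  also have "card (X r \<union> X r') < card (X r) + card (X r')"
  proof -
    have "finite (X r)" "finite (X r')" using fin r by auto
    then have "card (X r) + card (X r') = card (X r \<union> X r') + card (X r \<inter> X r')" by (rule card_Un_Int)
    moreover have "card (X r \<inter> X r') > 0" using ne \<open>finite (X r)\<close> by (simp add: card_gt_0_iff)
    ultimately show ?thesis by linarith
  qed
  finally have "card (\<Union>(X ` I)) < card (X r) + card (X r') + (\<Sum>i\<in>J. card (X i))" by linarith
  moreover have "(\<Sum>i\<in>I. card (X i)) = card (X r) + card (X r') + (\<Sum>i\<in>J. card (X i))"
    using IJ fJ by simp
  ultimately show False using eq by simp
qed

lemma sent_ineq: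
  assumes "0 < length b"
  and "\<forall>i<length b. b!i \<noteq> [] \<and> hd (b!i) = 1 \<and> last (b!i) = 1 \<and> \<not> has_self_edge (b!i)"
  and "\<forall>e \<in> sent_edges b. 2 \<le> sent_edge_count b e"
  and "\<forall>i<length b. \<exists>j<length b. j \<noteq> i \<and> edges (b!i) \<inter> edges (b!j) \<noteq> {}"
  shows "2 * card (\<Union>i<length b. set (b!i)) + length b \<le> (\<Sum>i<length b. length (b!i) - 1) + 2"
  using clt_sent.main_ineq[OF clt_sent.intro[OF assms]]
  unfolding clt_sent.V_def[OF clt_sent.intro[OF assms]] clt_sent.T_def[OF clt_sent.intro[OF assms]] .

lemma sent_unique:
  assumes "0 < length b"
  and "\<forall>i<length b. b!i \<noteq> [] \<and> hd (b!i) = 1 \<and> last (b!i) = 1 \<and> \<not> has_self_edge (b!i)"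
  and "\<forall>e \<in> sent_edges b. 2 \<le> sent_edge_count b e"
  and "\<forall>i<length b. \<exists>j<length b. j \<noteq> i \<and> edges (b!i) \<inter> edges (b!j) \<noteq> {}"
  and "2 * card (\<Union>i<length b. set (b!i)) + length b = (\<Sum>i<length b. length (b!i) - 1) + 2"
  and "i < length b" "j1 < length b" "j1 \<noteq> i" "edges (b!i) \<inter> edges (b!j1) \<noteq> {}"
  and "j2 < length b" "j2 \<noteq> i" "edges (b!i) \<inter> edges (b!j2) \<noteq> {}"
  shows "j1 = j2"
  using clt_sent.unique_partner[OF clt_sent.intro[OF assms(1-4)]] assms(5-)
  unfolding clt_sent.V_def[OF clt_sent.intro[OF assms(1-4)]] clt_sent.T_def[OF clt_sent.intro[OF assms(1-4)]]
  by blast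



lemma pair_sent_edges: "sent_edges [u,v] = edges u \<union> edges v"
  unfolding sent_edges_def by (simp add: lessThan_Suc numeral_2_eq_2 Un_commute)
lemma all_less2: "(\<forall>i<Suc (Suc 0). P i) \<longleftrightarrow> P 0 \<and> P (Suc 0)" by (auto simp: less_Suc_eq)
lemma ex_less2: "(\<exists>i<Suc (Suc 0). P i) \<longleftrightarrow> P 0 \<or> P (Suc 0)" by (auto simp: less_Suc_eq)

lemma pair_count: "sent_edge_count [u,v] e = edge_count u e + edge_count v e"
  unfolding sent_edge_count_def by (simp add: numeral_2_eq_2)
lemma pair_V: "(\<Union>i<length [u,v]. set ([u,v]!i)) = set u \<union> set v"
  by (simp add: lessThan_Suc numeral_2_eq_2 Un_commute)
lemma pair_wt: "wt [u,v] = card (set u \<union> set v)"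
  unfolding wt_def supp_def by (simp add: lessThan_Suc numeral_2_eq_2 Un_commute)
lemma pair_T: "(\<Sum>i<length [u,v]. length ([u,v]!i) - 1) = (length u - 1) + (length v - 1)"
  by (simp add: numeral_2_eq_2)

theorem mainTheorem5:
  fixes a :: "nat list list"
  assumes clt: "CLT a"
    and closed: "\<forall>i<length a. closed_word (a ! i) \<and> hd (a ! i) = 1 \<and> \<not> has_self_edge (a ! i)"
  shows "(\<forall>i<length a. \<exists>!j. j < length a \<and> j \<noteq> i \<and> edges (a ! i) \<inter> edges (a ! j) \<noteq> {})
    \<and> even (length a)
    \<and> (\<exists>p q :: nat \<Rightarrow> nat.
          (\<forall>r < length a div 2. p r < length a \<and> q r < length a \<and> p r \<noteq> q r) \<and>
          (\<forall>r < length a div 2. \<forall>r' < length a div 2. r \<noteq> r' \<longrightarrow> {p r, q r} \<inter> {p r', q r'} = {}) \<and>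
          (\<Union>r < length a div 2. {p r, q r}) = {..<length a} \<and>
          (\<forall>r < length a div 2. CLT_pair (a ! p r) (a ! q r)) \<and>
          (\<forall>r < length a div 2. \<forall>r' < length a div 2. r \<noteq> r' \<longrightarrow>
              (edges (a ! p r) \<union> edges (a ! q r)) \<inter> (edges (a ! p r') \<union> edges (a ! q r')) = {}) \<and>
          (\<forall>r < length a div 2. \<forall>r' < length a div 2. r \<noteq> r' \<longrightarrow>
              ((supp (a ! p r) \<union> supp (a ! q r)) - {1}) \<inter> ((supp (a ! p r') \<union> supp (a ! q r')) - {1}) = {}))"
proof -
  define n where "n = length a"
  have wc: "weak_CLT a" and eqr: "(of_nat (wt a)::rat) = 1 + (\<Sum>i<n. (of_nat (length (a!i)) - 2) / 2)"
    using clt unfolding CLT_def n_def by auto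
  have ne: "\<forall>i<n. a!i \<noteq> [] \<and> hd (a!i) = 1 \<and> last (a!i) = 1 \<and> \<not> has_self_edge (a!i)"
    using closed unfolding closed_word_def n_def by auto
  have cnt: "\<forall>e\<in>sent_edges a. 2 \<le> sent_edge_count a e"
    and sh: "\<forall>i<n. \<exists>j<n. j \<noteq> i \<and> edges (a!i) \<inter> edges (a!j) \<noteq> {}"
    and words: "\<forall>i<n. word (a!i)"
    using wc unfolding weak_CLT_def n_def by auto
  define t where "t i = length (a!i) - 1" for i
  define T where "T = (\<Sum>i<n. t i)"
  define V where "V = (\<Union>i<n. set (a!i))"
  have wtV: "wt a = card V" unfolding wt_def supp_def V_def n_def by simp
  have npos: "0 < n"
  proof (rule ccontr)
    assume "\<not> 0 < n"
    then have "n = 0" by simp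
    then have "wt a = 0" using wtV unfolding V_def by simp
    then show False using eqr \<open>n = 0\<close> by simp
  qed
  have tight: "2 * card V + n = T + 2"
  proof -
    have l1: "\<And>i. i < n \<Longrightarrow> 1 \<le> length (a!i)" using ne by (simp add: Suc_leI)
    have "(of_nat T::rat) = (\<Sum>i<n. of_nat (length (a!i)) - 1)"
      unfolding T_def t_def of_nat_sum
    proof (rule sum.cong[OF refl])
      fix x assume "x \<in> {..<n}"
      then have "1 \<le> length (a!x)" using l1 by simp
      then show "rat_of_nat (length (a ! x) - 1) = rat_of_nat (length (a ! x)) - 1"
        by (subst of_nat_diff) auto
    qed
    moreover have "(\<Sum>i<n. (of_nat (length (a!i)) - 2) / 2) = ((\<Sum>i<n. of_nat (length (a!i)) - 1) - of_nat n) / (2::rat)"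
    proof -
      have "(\<Sum>i<n. (of_nat (length (a!i)) - 2) / 2) = (\<Sum>i<n. ((of_nat (length (a!i)) - 1) - 1) / (2::rat))"
        by (rule sum.cong) auto
      also have "\<dots> = (\<Sum>i<n. (of_nat (length (a!i)) - 1) - 1) / 2" by (simp add: sum_divide_distrib)
      also have "\<dots> = ((\<Sum>i<n. of_nat (length (a!i)) - 1) - of_nat n) / 2" by (simp add: sum_subtractf)
      finally show ?thesis .
    qed
    ultimately have "(of_nat (2 * card V + n)::rat) = of_nat (T + 2)"
      using eqr wtV by simp
    then show ?thesis by (simp only: of_nat_eq_iff)
  qed
  have uniq: "\<And>i j1 j2. i < n \<Longrightarrow> j1 < n \<Longrightarrow> j1 \<noteq> i \<Longrightarrow> edges (a!i) \<inter> edges (a!j1) \<noteq> {}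
      \<Longrightarrow> j2 < n \<Longrightarrow> j2 \<noteq> i \<Longrightarrow> edges (a!i) \<inter> edges (a!j2) \<noteq> {} \<Longrightarrow> j1 = j2"
    using sent_unique[of a] npos ne cnt sh tight unfolding n_def V_def T_def t_def by blast
  define share where "share i j \<longleftrightarrow> j < n \<and> j \<noteq> i \<and> edges (a!i) \<inter> edges (a!j) \<noteq> {}" for i j
  have ex1: "\<forall>i<n. \<exists>!j. share i j"
    unfolding share_def using sh uniq by blast
  define P where "P i = (THE j. share i j)" for i
  have Pshare: "\<And>i. i < n \<Longrightarrow> share i (P i)" unfolding P_def using ex1 by (metis theI')
  have Puniq: "\<And>i j. i < n \<Longrightarrow> share i j \<Longrightarrow> j = P i" unfolding P_def using ex1 by (metis the1_equality)
  have Pn: "\<And>i. i < n \<Longrightarrow> P i < n \<and> P i \<noteq> i" using Pshare unfolding share_def by auto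
  have PP: "\<And>i. i < n \<Longrightarrow> P (P i) = i"
  proof -
    fix i assume i: "i < n"
    have "share (P i) i" using Pshare[OF i] i unfolding share_def by (auto simp: Int_commute)
    then show "P (P i) = i" using Puniq Pn[OF i] by auto
  qed
  define L where "L = {i. i < n \<and> i < P i}"
  define m where "m = card L"
  have finL: "finite L" unfolding L_def by simp
  have injP: "inj_on P L" unfolding L_def by (rule inj_onI) (metis PP mem_Collect_eq)
  have cover: "{..<n} = L \<union> P ` L"
  proof
    show "{..<n} \<subseteq> L \<union> P ` L"
    proof
      fix i assume "i \<in> {..<n}"
      then have i: "i < n" by simp
      show "i \<in> L \<union> P ` L"
      proof (cases "i < P i")
        case True then show ?thesis using i unfolding L_def by auto
      next
        case False
        then have "P i < P (P i)" using PP[OF i] Pn[OF i] by auto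
        then have "P i \<in> L" using Pn[OF i] unfolding L_def by auto
        then show ?thesis using PP[OF i] by (metis UnI2 image_eqI)
      qed
    qed
    show "L \<union> P ` L \<subseteq> {..<n}" using Pn unfolding L_def by auto
  qed
  have disjL: "L \<inter> P ` L = {}"
  proof (rule ccontr)
    assume "L \<inter> P ` L \<noteq> {}"
    then obtain j where j: "j \<in> L" "P j \<in> L" by auto
    then show False using PP unfolding L_def by fastforce
  qed
  have n2m: "n = 2 * m"
  proof -
    have "n = card (L \<union> P ` L)" using cover by (metis card_lessThan)
    also have "\<dots> = card L + card (P ` L)" using disjL finL by (simp add: card_Un_disjoint)
    also have "\<dots> = 2 * m" using card_image[OF injP] unfolding m_def by simp
    finally show ?thesis .
  qed
  then have ndiv: "n div 2 = m" by simp
  define sl where "sl = sorted_list_of_set L"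
  have sl: "length sl = m" "set sl = L" "distinct sl" unfolding sl_def m_def using finL by auto
  define p where "p r = sl ! r" for r
  define q where "q r = P (p r)" for r
  have pL: "\<And>r. r < m \<Longrightarrow> p r \<in> L" unfolding p_def using sl by (metis nth_mem)
  have pn: "\<And>r. r < m \<Longrightarrow> p r < n \<and> q r < n \<and> p r \<noteq> q r \<and> P (q r) = p r \<and> q r \<notin> L"
  proof -
    fix r assume r: "r < m"
    have "p r < n" using pL[OF r] unfolding L_def by auto
    moreover have "q r \<notin> L" using disjL pL[OF r] unfolding q_def by auto
    ultimately show "p r < n \<and> q r < n \<and> p r \<noteq> q r \<and> P (q r) = p r \<and> q r \<notin> L"
      using Pn PP pL[OF r] unfolding q_def by auto
  qed
  have pinj: "\<And>r r'. r < m \<Longrightarrow> r' < m \<Longrightarrow> p r = p r' \<Longrightarrow> r = r'"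
    unfolding p_def using sl by (metis nth_eq_iff_index_eq)
  have pdisj: "\<And>r r'. r < m \<Longrightarrow> r' < m \<Longrightarrow> r \<noteq> r' \<Longrightarrow> {p r, q r} \<inter> {p r', q r'} = {}"
  proof -
    fix r r' assume r: "r < m" "r' < m" "r \<noteq> r'"
    have "p r \<noteq> p r'" using pinj r by blast
    moreover have "q r \<noteq> q r'" using pn r \<open>p r \<noteq> p r'\<close> by metis
    moreover have "p r \<noteq> q r'" "q r \<noteq> p r'" using pn pL r by metis+
    ultimately show "{p r, q r} \<inter> {p r', q r'} = {}" by auto
  qed
  have union: "(\<Union>r<m. {p r, q r}) = {..<n}"
  proof -
    have "p ` {..<m} = L" unfolding p_def using sl by (metis atLeast_upt set_map map_nth sl(1))
    then have "(\<Union>r<m. {p r, q r}) = L \<union> P ` L" unfolding q_def by auto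
    then show ?thesis using cover by simp
  qed
  have Pair: "\<And>r x. r < m \<Longrightarrow> x \<in> {p r, q r} \<Longrightarrow> P x \<in> {p r, q r}"
    using pn unfolding q_def by auto
  have notshare: "\<And>r x z. r < m \<Longrightarrow> x \<in> {p r, q r} \<Longrightarrow> z < n \<Longrightarrow> z \<notin> {p r, q r} \<Longrightarrow>
      edges (a!x) \<inter> edges (a!z) = {}"
  proof (rule ccontr)
    fix r x z assume a: "r < m" "x \<in> {p r, q r}" "z < n" "z \<notin> {p r, q r}" "edges (a!x) \<inter> edges (a!z) \<noteq> {}"
    have "x < n" using a pn by auto
    then have "share x z" using a unfolding share_def by auto
    then have "z = P x" using Puniq \<open>x < n\<close> by blast
    then show False using Pair a by auto
  qed
  have edisj: "\<And>r r'. r < m \<Longrightarrow> r' < m \<Longrightarrow> r \<noteq> r' \<Longrightarrow>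
      (edges (a ! p r) \<union> edges (a ! q r)) \<inter> (edges (a ! p r') \<union> edges (a ! q r')) = {}"
  proof -
    fix r r' assume r: "r < m" "r' < m" "r \<noteq> r'"
    have "\<And>x z. x \<in> {p r, q r} \<Longrightarrow> z \<in> {p r', q r'} \<Longrightarrow> edges (a!x) \<inter> edges (a!z) = {}"
    proof -
      fix x z assume xz: "x \<in> {p r, q r}" "z \<in> {p r', q r'}"
      have "z < n" using xz pn r by auto
      moreover have "z \<notin> {p r, q r}" using pdisj[OF r] xz by auto
      ultimately show "edges (a!x) \<inter> edges (a!z) = {}" using notshare r xz by blast
    qed
    then show "(edges (a ! p r) \<union> edges (a ! q r)) \<inter> (edges (a ! p r') \<union> edges (a ! q r')) = {}"
      by blast
  qed
  define Vr where "Vr r = set (a ! p r) \<union> set (a ! q r)" for r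
  have pairweak: "\<And>r. r < m \<Longrightarrow> weak_CLT [a ! p r, a ! q r]"
  proof -
    fix r assume r: "r < m"
    have prn: "p r < n" "q r < n" "p r \<noteq> q r" using pn[OF r] by auto
    have cnteq: "\<And>e. e \<in> edges (a ! p r) \<union> edges (a ! q r) \<Longrightarrow>
         sent_edge_count a e = edge_count (a ! p r) e + edge_count (a ! q r) e"
    proof -
      fix e assume e: "e \<in> edges (a ! p r) \<union> edges (a ! q r)"
      have sub: "{p r, q r} \<subseteq> {..<n}" using prn by auto
      have "sent_edge_count a e = (\<Sum>i\<in>{p r, q r}. edge_count (a!i) e) + (\<Sum>i\<in>{..<n} - {p r, q r}. edge_count (a!i) e)"
        unfolding sent_edge_count_def n_def[symmetric] using sum.subset_diff[OF sub, of "\<lambda>i. edge_count (a!i) e"]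
        by (simp add: add.commute)
      moreover have "(\<Sum>i\<in>{..<n} - {p r, q r}. edge_count (a!i) e) = 0"
      proof (rule sum.neutral, rule ballI)
        fix z assume z: "z \<in> {..<n} - {p r, q r}"
        have "e \<notin> edges (a!z)"
          using e notshare[OF r _ _ _, of "p r" z] notshare[OF r _ _ _, of "q r" z] z by auto
        then show "edge_count (a!z) e = 0" by (rule edge_count_zero)
      qed
      ultimately show "sent_edge_count a e = edge_count (a ! p r) e + edge_count (a ! q r) e"
        using prn by simp
    qed
    have inE: "edges (a ! p r) \<union> edges (a ! q r) \<subseteq> sent_edges a"
      using prn unfolding sent_edges_def n_def by auto
    have sh2: "edges (a ! p r) \<inter> edges (a ! q r) \<noteq> {}"
      using Pshare[OF prn(1)] unfolding share_def q_def by auto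
    have c2: "\<forall>e\<in>edges (a ! p r) \<union> edges (a ! q r). 2 \<le> edge_count (a ! p r) e + edge_count (a ! q r) e"
    proof
      fix e assume e: "e \<in> edges (a ! p r) \<union> edges (a ! q r)"
      then have "e \<in> sent_edges a" using inE by auto
      then have "2 \<le> sent_edge_count a e" using cnt by blast
      then show "2 \<le> edge_count (a ! p r) e + edge_count (a ! q r) e" using cnteq[OF e] by metis
    qed
    have w2: "word (a ! p r)" "word (a ! q r)" using words prn by auto
    show "weak_CLT [a ! p r, a ! q r]"
      unfolding weak_CLT_def pair_sent_edges pair_count
      using w2 c2 sh2 by (simp add: all_less2 ex_less2 Int_commute)
  qed
  have pairineq: "\<And>r. r < m \<Longrightarrow> 2 * card (Vr r) \<le> t (p r) + t (q r)"
  proof -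
    fix r assume r: "r < m"
    have prn: "p r < n" "q r < n" using pn[OF r] by auto
    have w: "weak_CLT [a ! p r, a ! q r]" using pairweak[OF r] .
    have "2 * card (\<Union>i<length [a ! p r, a ! q r]. set ([a ! p r, a ! q r]!i)) + length [a ! p r, a ! q r]
       \<le> (\<Sum>i<length [a ! p r, a ! q r]. length ([a ! p r, a ! q r]!i) - 1) + 2"
      apply (rule sent_ineq)
      using w ne prn unfolding weak_CLT_def by (simp_all add: all_less2)
    then show "2 * card (Vr r) \<le> t (p r) + t (q r)"
      unfolding pair_V pair_T Vr_def t_def by simp
  qed
  have finpair: "\<forall>r\<in>{..<m}. finite {p r, q r}" by simp
  have pdisj': "\<forall>r\<in>{..<m}. \<forall>r'\<in>{..<m}. r \<noteq> r' \<longrightarrow> {p r, q r} \<inter> {p r', q r'} = {}"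
    using pdisj by blast
  have Tsum: "T = (\<Sum>r<m. t (p r) + t (q r))"
  proof -
    have "T = sum t (\<Union>r<m. {p r, q r})" unfolding T_def using union by simp
    also have "\<dots> = (\<Sum>r<m. sum t {p r, q r})" by (rule sum.UNION_disjoint[OF _ finpair pdisj']) simp
    also have "\<dots> = (\<Sum>r<m. t (p r) + t (q r))" using pn by (intro sum.cong) auto
    finally show ?thesis .
  qed
  have Vunion: "V = (\<Union>r<m. Vr r)"
  proof -
    have "V = (\<Union>i\<in>(\<Union>r<m. {p r, q r}). set (a!i))" unfolding V_def using union by simp
    also have "\<dots> = (\<Union>r<m. Vr r)" unfolding Vr_def by auto
    finally show ?thesis .
  qed
  have oneVr: "\<And>r. r < m \<Longrightarrow> 1 \<in> Vr r"
  proof -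
    fix r assume r: "r < m"
    have "a ! p r \<noteq> []" "hd (a ! p r) = 1" using ne pn[OF r] by auto
    then show "1 \<in> Vr r" unfolding Vr_def by (metis UnI1 hd_in_set)
  qed
  have finVr: "\<And>r. finite (Vr r)" unfolding Vr_def by simp
  have cardVr: "\<And>r. r < m \<Longrightarrow> card (Vr r) = Suc (card (Vr r - {1}))"
    using oneVr finVr by (metis card_Suc_Diff1)
  have mpos: "0 < m" using npos n2m by simp
  have oneV: "1 \<in> V" using Vunion oneVr mpos by blast
  have finV: "finite V" unfolding V_def by simp
  have cardV: "card V = Suc (card (V - {1}))" using oneV finV by (metis card_Suc_Diff1)
  have Vm1: "V - {1} = (\<Union>r<m. Vr r - {1})" using Vunion by auto
  have le1: "card (V - {1}) \<le> (\<Sum>r<m. card (Vr r - {1}))" unfolding Vm1 by (rule card_UN_le) simp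
  have ge: "(\<Sum>r<m. 2 * card (Vr r)) \<le> (\<Sum>r<m. t (p r) + t (q r))"
    by (rule sum_mono) (use pairineq in simp)
  have s2: "(\<Sum>r<m. 2 * card (Vr r)) = 2 * m + 2 * (\<Sum>r<m. card (Vr r - {1}))"
  proof -
    have "(\<Sum>r<m. 2 * card (Vr r)) = (\<Sum>r<m. 2 + 2 * card (Vr r - {1}))"
      by (rule sum.cong) (auto simp: cardVr)
    also have "\<dots> = (\<Sum>r<m. 2) + (\<Sum>r<m. 2 * card (Vr r - {1}))" by (rule sum.distrib)
    also have "\<dots> = 2 * m + 2 * (\<Sum>r<m. card (Vr r - {1}))" by (simp add: sum_distrib_left)
    finally show ?thesis .
  qed
  have eq1: "(\<Sum>r<m. 2 * card (Vr r)) = (\<Sum>r<m. t (p r) + t (q r))"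
    using tight Tsum cardV n2m le1 ge s2 by linarith
  have eq2: "card (V - {1}) = (\<Sum>r<m. card (Vr r - {1}))"
    using tight Tsum cardV n2m le1 ge s2 by linarith
  have pairEq: "\<And>r. r < m \<Longrightarrow> 2 * card (Vr r) = t (p r) + t (q r)"
  proof (rule ccontr)
    fix r assume r: "r < m" and nq: "2 * card (Vr r) \<noteq> t (p r) + t (q r)"
    have "(\<Sum>r<m. 2 * card (Vr r)) < (\<Sum>r<m. t (p r) + t (q r))"
    proof (rule sum_strict_mono_ex1)
      show "\<forall>x\<in>{..<m}. 2 * card (Vr x) \<le> t (p x) + t (q x)" using pairineq by simp
      show "\<exists>x\<in>{..<m}. 2 * card (Vr x) < t (p x) + t (q x)"
        using pairineq[OF r] nq r by (intro bexI[of _ r]) auto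
    qed simp
    then show False using eq1 by simp
  qed
  have vdisj: "\<And>r r'. r < m \<Longrightarrow> r' < m \<Longrightarrow> r \<noteq> r' \<Longrightarrow> (Vr r - {1}) \<inter> (Vr r' - {1}) = {}"
  proof -
    fix r r' assume r: "r < m" "r' < m" "r \<noteq> r'"
    show "(Vr r - {1}) \<inter> (Vr r' - {1}) = {}"
      by (rule card_UN_eq_disj[where X="\<lambda>r. Vr r - {1}" and I="{..<m}"])
         (use eq2 Vm1 finVr r in auto)
  qed
  have cltpair: "\<And>r. r < m \<Longrightarrow> CLT_pair (a ! p r) (a ! q r)"
  proof -
    fix r assume r: "r < m"
    have l1: "1 \<le> length (a ! p r)" "1 \<le> length (a ! q r)" using ne pn[OF r] by (auto simp: Suc_leI)
    have "2 * wt [a ! p r, a ! q r] = (length (a ! p r) - 1) + (length (a ! q r) - 1)"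
      using pairEq[OF r] unfolding pair_wt Vr_def t_def .
    then have "(of_nat (2 * wt [a ! p r, a ! q r])::rat) = of_nat ((length (a ! p r) - 1) + (length (a ! q r) - 1))"
      by simp
    then have "2 * (of_nat (wt [a ! p r, a ! q r])::rat) = (of_nat (length (a ! p r)) - 1) + (of_nat (length (a ! q r)) - 1)"
      using l1 by (simp add: of_nat_diff)
    then have "(of_nat (wt [a ! p r, a ! q r])::rat) = (of_nat (length (a ! p r)) + of_nat (length (a ! q r))) / 2 - 1"
      by (simp add: field_simps)
    then show "CLT_pair (a ! p r) (a ! q r)" unfolding CLT_pair_def using pairweak[OF r] by simp
  qed
  have part1: "\<forall>i<length a. \<exists>!j. j < length a \<and> j \<noteq> i \<and> edges (a ! i) \<inter> edges (a ! j) \<noteq> {}"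
    using ex1 unfolding share_def n_def by simp
  have part2: "even (length a)" using n2m unfolding n_def by simp
  have part3: "\<exists>p q :: nat \<Rightarrow> nat.
          (\<forall>r < length a div 2. p r < length a \<and> q r < length a \<and> p r \<noteq> q r) \<and>
          (\<forall>r < length a div 2. \<forall>r' < length a div 2. r \<noteq> r' \<longrightarrow> {p r, q r} \<inter> {p r', q r'} = {}) \<and>
          (\<Union>r < length a div 2. {p r, q r}) = {..<length a} \<and>
          (\<forall>r < length a div 2. CLT_pair (a ! p r) (a ! q r)) \<and>
          (\<forall>r < length a div 2. \<forall>r' < length a div 2. r \<noteq> r' \<longrightarrow>
              (edges (a ! p r) \<union> edges (a ! q r)) \<inter> (edges (a ! p r') \<union> edges (a ! q r')) = {}) \<and>
          (\<forall>r < length a div 2. \<forall>r' < length a div 2. r \<noteq> r' \<longrightarrow>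
              ((supp (a ! p r) \<union> supp (a ! q r)) - {1}) \<inter> ((supp (a ! p r') \<union> supp (a ! q r')) - {1}) = {})"
    apply (rule exI[of _ p], rule exI[of _ q])
    unfolding n_def[symmetric] ndiv supp_def
    using pn pdisj union cltpair edisj vdisj unfolding Vr_def by auto
  show ?thesis using part1 part2 part3 by blast
qed


end
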